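(* Let $\mathcal{G}_R$ be the class of all finite reflexive graphs and let $G\in\mathcal{G}_R$. The class $\mathrm{Av}(G)=\{H\in\mathcal{G}_R: G\not\preceq H\}$, with respect to the homomorphic image ordering $\preceq$, is well quasi-ordered if and only if $G$ is isomorphic to $N_{n,k}$ for some natural numbers $n,k$ with $2k<n$.
   Context: A reflexive graph is a set with a symmetric edge relation having a loop at every vertex. A homomorphism maps edges to edges (and may collapse edges or non-edges to single vertices). Homomorphic image ordering: $A\preceq B$ iff there is a surjective homomorphism $B\to A$. For $2k\le n$, $N_{n,k}$ is the reflexive graph on $\{1,\dots,n\}$ with all pairs of distinct vertices adjacent except $\{1,2\},\{3,4\},\dots,\{2k-1,2k\}$ (obtained from $K_n$ by deleting $k$ disjoint edges). Well quasi-ordered means no infinite strictly decreasing sequence and no infinite antichain; graphs considered up to isomorphism. *)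

theory Defs
  imports Main
begin

text \<open>A graph with vertices drawn from nat: vertex set and adjacency relation.
  Every finite graph is isomorphic to one of this form.\<close>
type_synonym graph = "nat set \<times> (nat \<Rightarrow> nat \<Rightarrow> bool)"

definition verts :: "graph \<Rightarrow> nat set" where "verts G = fst G"
definition adj :: "graph \<Rightarrow> nat \<Rightarrow> nat \<Rightarrow> bool" where "adj G = snd G"

definition fin_refl_graph :: "graph \<Rightarrow> bool" where
  "fin_refl_graph G \<longleftrightarrow> finite (verts G)
     \<and> (\<forall>x y. adj G x y \<longrightarrow> x \<in> verts G \<and> y \<in> verts G)
     \<and> (\<forall>x y. adj G x y \<longrightarrow> adj G y x)
     \<and> (\<forall>x \<in> verts G. adj G x x)"

definition graph_hom :: "(nat \<Rightarrow> nat) \<Rightarrow> graph \<Rightarrow> graph \<Rightarrow> bool" where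
  "graph_hom f B A \<longleftrightarrow> f ` verts B \<subseteq> verts A
     \<and> (\<forall>x \<in> verts B. \<forall>y \<in> verts B. adj B x y \<longrightarrow> adj A (f x) (f y))"

text \<open>Homomorphic image ordering: A \<preceq> B iff there is a surjective homomorphism B \<rightarrow> A.\<close>
definition hom_image :: "graph \<Rightarrow> graph \<Rightarrow> bool" where
  "hom_image A B \<longleftrightarrow> (\<exists>f. graph_hom f B A \<and> f ` verts B = verts A)"

definition graph_iso :: "graph \<Rightarrow> graph \<Rightarrow> bool" where
  "graph_iso A B \<longleftrightarrow> (\<exists>f. bij_betw f (verts A) (verts B)
     \<and> (\<forall>x \<in> verts A. \<forall>y \<in> verts A. adj A x y \<longleftrightarrow> adj B (f x) (f y)))"

definition N_graph :: "nat \<Rightarrow> nat \<Rightarrow> graph" where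
  "N_graph n k = ({1..n}, (\<lambda>x y. x \<in> {1..n} \<and> y \<in> {1..n}
       \<and> \<not> (\<exists>i \<in> {1..k}. {x, y} = {2*i - 1, 2*i})))"

definition Av :: "graph \<Rightarrow> graph set" where
  "Av G = {H. fin_refl_graph H \<and> \<not> hom_image G H}"

text \<open>Since the
  ordering is isomorphism invariant, this is the notion up to isomorphism.\<close>
definition wqo_hom :: "graph set \<Rightarrow> bool" where
  "wqo_hom C \<longleftrightarrow>
     \<not> (\<exists>g :: nat \<Rightarrow> graph. (\<forall>i. g i \<in> C) \<and>
          (\<forall>i. hom_image (g (Suc i)) (g i) \<and> \<not> hom_image (g i) (g (Suc i))))
   \<and> \<not> (\<exists>g :: nat \<Rightarrow> graph. (\<forall>i. g i \<in> C) \<and>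
          (\<forall>i j. i \<noteq> j \<longrightarrow> \<not> hom_image (g i) (g j)))"

end

theory Submission
  imports Defs "HOL-Library.Ramsey"
begin

definition prt :: "nat \<Rightarrow> nat \<Rightarrow> bool" where
  "prt a b \<longleftrightarrow> a \<noteq> b \<and> (a+1) div 2 = (b+1) div 2"

lemma pair_iff: "(\<exists>i \<in> {1..k}. {a, b} = {2*i - 1, 2*i::nat}) \<longleftrightarrow> prt a b \<and> (a+1) div 2 \<le> k"
proof
  assume "\<exists>i \<in> {1..k}. {a, b} = {2*i - 1, 2*i::nat}"
  then obtain i where "i \<in> {1..k}" "{a, b} = {2*i - 1, 2*i}" by blast
  then show "prt a b \<and> (a+1) div 2 \<le> k" unfolding prt_def doubleton_eq_iff by auto
next
  assume h: "prt a b \<and> (a+1) div 2 \<le> k"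
  show "\<exists>i \<in> {1..k}. {a, b} = {2*i - 1, 2*i::nat}"
  proof (rule bexI[of _ "(a+1) div 2"])
    have ab: "a \<noteq> b" "(a+1) div 2 = (b+1) div 2" using h unfolding prt_def by auto
    have ea: "a = 2*((a+1) div 2) - 1 \<or> a = 2*((a+1) div 2)" by (cases "even a") (auto elim!: evenE oddE)
    have eb: "b = 2*((b+1) div 2) - 1 \<or> b = 2*((b+1) div 2)" by (cases "even b") (auto elim!: evenE oddE)
    show "{a, b} = {2*((a+1) div 2) - 1, 2*((a+1) div 2)}" using ea eb ab unfolding doubleton_eq_iff by auto
    show "(a+1) div 2 \<in> {1..k}" using h unfolding prt_def by auto
  qed
qed

lemma verts_pair[simp]: "verts (a,b) = a" by (simp add: verts_def)
lemma adj_pair[simp]: "adj (a,b) = b" by (simp add: adj_def)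

lemma N_verts[simp]: "verts (N_graph n k) = {1..n}"
  by (simp add: N_graph_def verts_def)

lemma N_adj: "adj (N_graph n k) a b \<longleftrightarrow> a \<in> {1..n} \<and> b \<in> {1..n} \<and> \<not> (prt a b \<and> (a+1) div 2 \<le> k)"
  unfolding N_graph_def adj_def using pair_iff by auto

lemma prt_sym: "prt a b \<Longrightarrow> prt b a" unfolding prt_def by auto
lemma two_cases: "x = 2*((x+1) div 2) - 1 \<or> x = 2*((x+1) div 2)" for x :: nat
  by (cases "even x") (auto elim!: evenE oddE)

lemma prt_uniq: assumes "prt a b" "prt a c" shows "b = c"
proof -
  define i where "i = (a+1) div 2"
  have "(b+1) div 2 = i" "(c+1) div 2 = i" "a \<noteq> b" "a \<noteq> c" using assms unfolding prt_def i_def by auto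
  moreover have "a = 2*i - 1 \<or> a = 2*i" unfolding i_def by (rule two_cases)
  moreover have "b = 2*((b+1) div 2) - 1 \<or> b = 2*((b+1) div 2)" by (rule two_cases)
  moreover have "c = 2*((c+1) div 2) - 1 \<or> c = 2*((c+1) div 2)" by (rule two_cases)
  ultimately show ?thesis by auto
qed

lemma fin_N: "fin_refl_graph (N_graph n k)"
  unfolding fin_refl_graph_def using prt_sym by (auto simp: N_adj prt_def)

lemma hom_image_card:
  assumes "fin_refl_graph B" "hom_image A B"
  shows "card (verts A) \<le> card (verts B)"
  using assms unfolding hom_image_def fin_refl_graph_def by (metis card_image_le)

lemma iso_sym: assumes "graph_iso A B" shows "graph_iso B A"
proof -
  obtain f where f: "bij_betw f (verts A) (verts B)"
    "\<forall>x \<in> verts A. \<forall>y \<in> verts A. adj A x y \<longleftrightarrow> adj B (f x) (f y)"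
    using assms unfolding graph_iso_def by blast
  let ?g = "the_inv_into (verts A) f"
  have g: "bij_betw ?g (verts B) (verts A)" using f(1) bij_betw_the_inv_into by blast
  have "\<forall>x \<in> verts B. \<forall>y \<in> verts B. adj B x y \<longleftrightarrow> adj A (?g x) (?g y)"
  proof (intro ballI)
    fix x y assume "x \<in> verts B" "y \<in> verts B"
    then have "?g x \<in> verts A" "?g y \<in> verts A" "f (?g x) = x" "f (?g y) = y"
      using g f(1) by (auto simp: bij_betw_def f_the_inv_into_f)
    then show "adj B x y \<longleftrightarrow> adj A (?g x) (?g y)" using f(2) by metis
  qed
  then show ?thesis using g unfolding graph_iso_def by blast
qed

lemma iso_hom_image: assumes "graph_iso A B" "hom_image A H" shows "hom_image B H"
proof -
  obtain f where f: "bij_betw f (verts A) (verts B)"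
    "\<forall>x \<in> verts A. \<forall>y \<in> verts A. adj A x y \<longleftrightarrow> adj B (f x) (f y)"
    using assms unfolding graph_iso_def by blast
  obtain g where g: "graph_hom g H A" "g ` verts H = verts A" using assms unfolding hom_image_def by blast
  have "graph_hom (f \<circ> g) H B" "(f \<circ> g) ` verts H = verts B"
  proof -
    have gv: "\<And>x. x \<in> verts H \<Longrightarrow> g x \<in> verts A" using g by blast
    show "graph_hom (f \<circ> g) H B" unfolding graph_hom_def
    proof (intro conjI ballI impI)
      show "(f \<circ> g) ` verts H \<subseteq> verts B" using gv f(1) unfolding bij_betw_def by auto
      fix x y assume "x \<in> verts H" "y \<in> verts H" "adj H x y"
      then show "adj B ((f \<circ> g) x) ((f \<circ> g) y)" using g(1) gv f(2) unfolding graph_hom_def by auto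
    qed
    show "(f \<circ> g) ` verts H = verts B" using g(2) f(1) unfolding bij_betw_def by (metis image_comp)
  qed
  then show ?thesis unfolding hom_image_def by blast
qed

lemma iso_Av: assumes "graph_iso A B" shows "Av A = Av B"
  unfolding Av_def using iso_hom_image iso_sym assms by blast

definition ec :: "graph \<Rightarrow> nat" where
  "ec B = card {(x,y). x \<in> verts B \<and> y \<in> verts B \<and> adj B x y}"

lemma ec_le: assumes "fin_refl_graph B" shows "ec B \<le> card (verts B) * card (verts B)"
proof -
  have sub: "{(x,y). x \<in> verts B \<and> y \<in> verts B \<and> adj B x y} \<subseteq> verts B \<times> verts B" by auto
  have fin: "finite (verts B)" using assms unfolding fin_refl_graph_def by auto
  have "ec B \<le> card (verts B \<times> verts B)"
    unfolding ec_def by (rule card_mono[OF finite_cartesian_product[OF fin fin] sub])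
  then show ?thesis by (simp add: card_cartesian_product)
qed

lemma hom_image_eqcard:
  assumes "fin_refl_graph A" "fin_refl_graph B" "hom_image A B" "card (verts A) = card (verts B)"
  shows "ec B \<le> ec A \<and> (ec B = ec A \<longrightarrow> hom_image B A)"
proof -
  obtain f where f: "graph_hom f B A" "f ` verts B = verts A" using assms unfolding hom_image_def by blast
  have finB: "finite (verts B)" and finA: "finite (verts A)" using assms unfolding fin_refl_graph_def by auto
  have inj: "inj_on f (verts B)" using eq_card_imp_inj_on[OF finB, of f] f(2) assms(4) by simp
  define EA where "EA = {(x,y). x \<in> verts A \<and> y \<in> verts A \<and> adj A x y}"
  define EB where "EB = {(x,y). x \<in> verts B \<and> y \<in> verts B \<and> adj B x y}"
  define F where "F = (\<lambda>(x,y). (f x, f y))"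
  have finEA: "finite EA" unfolding EA_def
    by (rule finite_subset[of _ "verts A \<times> verts A"]) (auto simp: finA)
  have injF: "inj_on F EB" using inj unfolding F_def EB_def inj_on_def by auto
  have sub: "F ` EB \<subseteq> EA" using f(1) unfolding F_def EB_def EA_def graph_hom_def by auto
  have le: "ec B \<le> ec A" unfolding ec_def EA_def[symmetric] EB_def[symmetric]
    using card_inj_on_le[OF injF sub finEA] .
  moreover have "ec B = ec A \<longrightarrow> hom_image B A"
  proof
    assume eq: "ec B = ec A"
    have "card (F ` EB) = card EA" using eq card_image[OF injF] unfolding ec_def EA_def[symmetric] EB_def[symmetric] by simp
    then have FE: "F ` EB = EA" using card_subset_eq[OF finEA sub] by simp
    let ?g = "the_inv_into (verts B) f"
    have gb: "bij_betw ?g (verts A) (verts B)" using bij_betw_the_inv_into[of f "verts B" "verts A"] inj f(2)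
      unfolding bij_betw_def by blast
    have "graph_hom ?g A B" unfolding graph_hom_def
    proof (intro conjI ballI impI)
      show "?g ` verts A \<subseteq> verts B" using gb unfolding bij_betw_def by auto
      fix a b assume ab: "a \<in> verts A" "b \<in> verts A" "adj A a b"
      then have "(a,b) \<in> F ` EB" using FE unfolding EA_def by auto
      then obtain x y where xy: "(x,y) \<in> EB" "f x = a" "f y = b" unfolding F_def by auto
      then have "?g a = x" "?g b = y" using the_inv_into_f_f[OF inj] unfolding EB_def by auto
      then show "adj B (?g a) (?g b)" using xy(1) unfolding EB_def by auto
    qed
    then show "hom_image B A" unfolding hom_image_def using gb unfolding bij_betw_def by blast
  qed
  ultimately show ?thesis by blast
qed

lemma no_desc:
  assumes "\<forall>i. fin_refl_graph (g i)"
  shows "\<not> (\<forall>i. hom_image (g (Suc i)) (g i) \<and> \<not> hom_image (g i) (g (Suc i)))"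
proof
  assume h: "\<forall>i. hom_image (g (Suc i)) (g i) \<and> \<not> hom_image (g i) (g (Suc i))"
  define c where "c i = card (verts (g i))" for i
  define e where "e i = ec (g i)" for i
  have cs: "c (Suc i) \<le> c i" for i using hom_image_card assms h unfolding c_def by blast
  have c0: "c i \<le> c 0" for i by (induction i) (use cs le_trans in blast)+
  define B where "B = c 0 * c 0"
  have eB: "e i \<le> B" for i using ec_le[of "g i"] assms c0[of i] unfolding e_def B_def c_def
    by (meson le_trans mult_le_mono)
  define \<phi> where "\<phi> i = (B+1) * c i + (B - e i)" for i
  have step: "\<phi> (Suc i) < \<phi> i" for i
  proof (cases "c (Suc i) < c i")
    case True
    have "\<phi> (Suc i) \<le> (B+1) * c (Suc i) + B" unfolding \<phi>_def by simp
    also have "\<dots> < (B+1) * (c (Suc i) + 1)" by simp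
    also have "\<dots> \<le> (B+1) * c i" using True by (intro mult_le_mono2) simp
    also have "\<dots> \<le> \<phi> i" unfolding \<phi>_def by simp
    finally show ?thesis .
  next
    case False
    then have eq: "c (Suc i) = c i" using cs[of i] by simp
    have "e i \<le> e (Suc i) \<and> (e i = e (Suc i) \<longrightarrow> hom_image (g i) (g (Suc i)))"
      using hom_image_eqcard[of "g (Suc i)" "g i"] assms h eq unfolding c_def e_def by blast
    then have "e i < e (Suc i)" using h by auto
    then show ?thesis unfolding \<phi>_def using eq eB[of "Suc i"] by simp
  qed
  have "\<phi> i + i \<le> \<phi> 0" for i
  proof (induction i)
    case (Suc i) then show ?case using step[of i] by simp
  qed simp
  from this[of "Suc (\<phi> 0)"] show False by simp
qed

lemma onto_N2m:
  assumes G: "fin_refl_graph G" and hi: "hom_image G (N_graph (2*m) m)" and cd: "card (verts G) < 2*m"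
  shows "(\<forall>x\<in>verts G. \<forall>y\<in>verts G. \<forall>z\<in>verts G. \<not> adj G x y \<longrightarrow> \<not> adj G x z \<longrightarrow> y = z)
       \<and> (\<exists>x\<in>verts G. \<forall>y\<in>verts G. adj G x y)"
proof -
  obtain f where f: "graph_hom f (N_graph (2*m) m) G" "f ` {1..2*m} = verts G"
    using hi unfolding hom_image_def by auto
  have nadj: "prt a b" if "a \<in> {1..2*m}" "b \<in> {1..2*m}" "\<not> adj G (f a) (f b)" for a b
  proof (rule ccontr)
    assume "\<not> prt a b"
    then have "adj (N_graph (2*m) m) a b" using that by (auto simp: N_adj)
    then show False using f(1) that unfolding graph_hom_def by auto
  qed
  have 1: "\<forall>x\<in>verts G. \<forall>y\<in>verts G. \<forall>z\<in>verts G. \<not> adj G x y \<longrightarrow> \<not> adj G x z \<longrightarrow> y = z"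
  proof (intro ballI impI)
    fix x y z assume "x \<in> verts G" "y \<in> verts G" "z \<in> verts G" "\<not> adj G x y" "\<not> adj G x z"
    then obtain a b c where "a \<in> {1..2*m}" "b \<in> {1..2*m}" "c \<in> {1..2*m}" "x = f a" "y = f b" "z = f c"
      unfolding f(2)[symmetric] by blast
    moreover note nxy = \<open>\<not> adj G x y\<close> and nxz = \<open>\<not> adj G x z\<close>
    ultimately have "prt a b" "prt a c" using nadj by auto
    then have "b = c" by (rule prt_uniq)
    then show "y = z" using \<open>y = f b\<close> \<open>z = f c\<close> by simp
  qed
  have "\<not> inj_on f {1..2*m}"
  proof
    assume "inj_on f {1..2*m}"
    then have "card (f ` {1..2*m}) = 2*m" by (simp add: card_image)
    then have "card (verts G) = 2*m" using f(2) by simp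
    then show False using cd by simp
  qed
  then obtain a b where ab: "a \<in> {1..2*m}" "b \<in> {1..2*m}" "a \<noteq> b" "f a = f b"
    unfolding inj_on_def by blast
  have "\<forall>y\<in>verts G. adj G (f a) y"
  proof
    fix y assume "y \<in> verts G"
    then obtain c where c: "c \<in> {1..2*m}" "y = f c" unfolding f(2)[symmetric] by blast
    show "adj G (f a) y"
    proof (rule ccontr)
      assume "\<not> adj G (f a) y"
      then have "prt a c" "prt b c" using nadj ab c by auto
      then have "prt c a" "prt c b" using prt_sym by auto
      then show False using prt_uniq ab(3) by blast
    qed
  qed
  moreover have "f a \<in> verts G" using f(2) ab(1) by blast
  ultimately show ?thesis using 1 by blast
qed

lemma N_shift:
  assumes "a \<in> {1..t-2}" "b \<in> {1..t-2}" "2 \<le> t"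
  shows "adj (N_graph t (Suc j)) (a+2) (b+2) \<longleftrightarrow> adj (N_graph (t-2) j) a b"
proof -
  have "(a+2+1) div 2 = Suc ((a+1) div 2)" "(b+2+1) div 2 = Suc ((b+1) div 2)" by simp_all
  then have "prt (a+2) (b+2) \<longleftrightarrow> prt a b" unfolding prt_def by auto
  then show ?thesis using assms by (auto simp: N_adj)
qed

lemma bij_Suc: "bij_betw Suc {0..<n} {1..n}"
  by (simp add: bij_betw_def image_Suc_atLeastLessThan atLeastLessThanSuc_atLeastAtMost)

lemma iso_N_ex:
  "finite V \<Longrightarrow> (\<forall>x y. R x y \<longrightarrow> x \<in> V \<and> y \<in> V) \<Longrightarrow> (\<forall>x y. R x y \<longrightarrow> R y x) \<Longrightarrow> (\<forall>x\<in>V. R x x)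
   \<Longrightarrow> (\<forall>x\<in>V. \<forall>y\<in>V. \<forall>z\<in>V. \<not> R x y \<longrightarrow> \<not> R x z \<longrightarrow> y = z)
   \<Longrightarrow> \<exists>j. 2*j \<le> card V \<and> graph_iso (V,R) (N_graph (card V) j)"
proof (induction "card V" arbitrary: V R rule: less_induct)
  case less
  show ?case
  proof (cases "\<forall>x\<in>V. \<forall>y\<in>V. R x y")
    case True
    obtain h where h: "bij_betw h V {0..<card V}" using ex_bij_betw_finite_nat less.prems(1) by blast
    have hb: "bij_betw (Suc \<circ> h) V {1..card V}" using bij_betw_trans[OF h bij_Suc] .
    have "\<forall>x\<in>V. \<forall>y\<in>V. R x y \<longleftrightarrow> adj (N_graph (card V) 0) ((Suc \<circ> h) x) ((Suc \<circ> h) y)"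
      using True hb unfolding bij_betw_def by (auto simp: N_adj)
    then show ?thesis using hb unfolding graph_iso_def by (intro exI[of _ 0]) auto
  next
    case False
    then obtain x y where xy: "x \<in> V" "y \<in> V" "\<not> R x y" by blast
    then have xny: "x \<noteq> y" using less.prems(4) by auto
    define V' where "V' = V - {x,y}"
    define R' where "R' u v = (R u v \<and> u \<in> V' \<and> v \<in> V')" for u v
    have c2: "card {x,y} = 2" using xny by simp
    have "card {x,y} \<le> card V" using xy less.prems(1) by (intro card_mono) auto
    moreover have "card V' = card V - card {x,y}" unfolding V'_def using xy less.prems(1)
      by (intro card_Diff_subset) auto
    ultimately have cV: "card V = card V' + 2" using c2 by simp
    have "\<exists>j. 2*j \<le> card V' \<and> graph_iso (V',R') (N_graph (card V') j)"
      by (rule less.hyps) (use cV less.prems in \<open>auto simp: V'_def R'_def\<close>)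
    then obtain j h where j: "2*j \<le> card V'" and hb: "bij_betw h V' {1..card V'}"
      and hadj: "\<forall>u\<in>V'. \<forall>v\<in>V'. R' u v \<longleftrightarrow> adj (N_graph (card V') j) (h u) (h v)"
      unfolding graph_iso_def by auto
    define h' where "h' v = (if v = x then 1 else if v = y then 2 else h v + 2)" for v
    define t where "t = card V"
    have hv: "h v \<in> {1..card V'}" if "v \<in> V'" for v using hb that unfolding bij_betw_def by auto
    have img: "h' ` V = {1..t}"
    proof
      show "h' ` V \<subseteq> {1..t}" using hv xy unfolding h'_def t_def cV V'_def by fastforce
      show "{1..t} \<subseteq> h' ` V"
      proof
        fix a assume a: "a \<in> {1..t}"
        show "a \<in> h' ` V"
        proof (cases "a \<le> 2")
          case True
          then have "a = 1 \<or> a = 2" using a by auto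
          then show ?thesis using xy xny unfolding h'_def by force
        next
          case False
          then have "a - 2 \<in> h ` V'" using hb a unfolding bij_betw_def t_def cV by auto
          then obtain v where v: "v \<in> V'" "h v = a - 2" by (metis imageE)
          then have "h' v = a" using False unfolding h'_def V'_def by auto
          then show ?thesis using v unfolding V'_def by blast
        qed
      qed
    qed
    have bh': "bij_betw h' V {1..t}" unfolding bij_betw_def
      using img eq_card_imp_inj_on[OF less.prems(1), of h'] by (simp add: t_def)
    have adjx: "R x v" if "v \<in> V'" for v
      using that less.prems(5) xy unfolding V'_def by blast
    have adjy: "R y v" if "v \<in> V'" for v
      using that less.prems(5) less.prems(3) xy unfolding V'_def by blast
    have big: "3 \<le> h v + 2" "2 \<le> (h v + 2 + 1) div 2" if "v \<in> V'" for v using hv[OF that] by auto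
    have hx: "h' x = 1" and hy: "h' y = 2" using xny unfolding h'_def by auto
    have hv': "h' v = h v + 2" if "v \<in> V'" for v using that unfolding h'_def V'_def by auto
    have t2: "2 \<le> t" unfolding t_def cV by simp
    have hvt: "h v + 2 \<le> t" if "v \<in> V'" for v using hv[OF that] unfolding t_def cV by simp
    have nx: "\<not> prt 1 (h v + 2)" "\<not> prt (h v + 2) 1" "\<not> prt 2 (h v + 2)" "\<not> prt (h v + 2) 2"
      if "v \<in> V'" for v using big[OF that] unfolding prt_def by auto
    have p12: "prt 1 2" "prt 2 1" "\<not> prt 1 1" "\<not> prt 2 2" unfolding prt_def by auto
    have Rsym: "R u v \<longleftrightarrow> R v u" for u v using less.prems(3) by blast
    have main: "R u v \<longleftrightarrow> adj (N_graph t (Suc j)) (h' u) (h' v)" if uv: "u \<in> V" "v \<in> V" for u v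
    proof -
      consider "u = x" | "u = y" | "u \<in> V'" using uv unfolding V'_def by blast
      then show ?thesis
      proof cases
        case 1
        consider "v = x" | "v = y" | "v \<in> V'" using uv unfolding V'_def by blast
        then show ?thesis
        proof cases
          case 1 then show ?thesis using \<open>u = x\<close> hx t2 xy less.prems(4) p12 by (simp add: N_adj)
        next
          case 2 then show ?thesis using \<open>u = x\<close> hx hy t2 xy p12 by (simp add: N_adj)
        next
          case 3 then show ?thesis using \<open>u = x\<close> hx hv' adjx nx hvt t2 by (simp add: N_adj)
        qed
      next
        case 2
        consider "v = x" | "v = y" | "v \<in> V'" using uv unfolding V'_def by blast
        then show ?thesis
        proof cases
          case 1 then show ?thesis using \<open>u = y\<close> hx hy t2 xy p12 Rsym by (simp add: N_adj)
        next
          case 2 then show ?thesis using \<open>u = y\<close> hy t2 xy less.prems(4) p12 by (simp add: N_adj)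
        next
          case 3 then show ?thesis using \<open>u = y\<close> hy hv' adjy nx hvt t2 by (simp add: N_adj)
        qed
      next
        case 3
        consider "v = x" | "v = y" | "v \<in> V'" using uv unfolding V'_def by blast
        then show ?thesis
        proof cases
          case 1 then show ?thesis using 3 hx hv' adjx nx hvt t2 Rsym by (simp add: N_adj)
        next
          case 2 then show ?thesis using 3 hy hv' adjy nx hvt t2 Rsym by (simp add: N_adj)
        next
          case v3: 3
          have hu: "h' u = h u + 2" "h' v = h v + 2" using 3 v3 hv' by auto
          have "R u v \<longleftrightarrow> R' u v" using 3 v3 unfolding R'_def by auto
          also have "\<dots> \<longleftrightarrow> adj (N_graph (card V') j) (h u) (h v)" using hadj 3 v3 by blast
          also have "\<dots> \<longleftrightarrow> adj (N_graph t (Suc j)) (h u + 2) (h v + 2)"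
            using N_shift[of "h u" t "h v" j] hv[OF 3] hv[OF v3] unfolding t_def cV by simp
          finally show ?thesis using hu by simp
        qed
      qed
    qed
    show ?thesis
      apply (rule exI[of _ "Suc j"])
      using j cV bh' main unfolding graph_iso_def t_def by auto
  qed
qed

lemma dominating_strict:
  assumes iso: "graph_iso G (N_graph t j)" and j: "2*j \<le> t"
    and x: "x \<in> verts G" "\<forall>y\<in>verts G. adj G x y"
  shows "2*j < t"
proof (rule ccontr)
  assume "\<not> 2*j < t"
  then have tj: "t = 2*j" using j by simp
  obtain h where h: "bij_betw h (verts G) {1..t}"
    "\<forall>x \<in> verts G. \<forall>y \<in> verts G. adj G x y \<longleftrightarrow> adj (N_graph t j) (h x) (h y)"
    using iso unfolding graph_iso_def by auto
  define a where "a = h x"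
  have a: "a \<in> {1..t}" using h(1) x(1) unfolding a_def bij_betw_def by auto
  define b where "b = (if even a then a - 1 else a + 1)"
  have b: "b \<in> {1..t} \<and> prt a b \<and> (a+1) div 2 \<le> j"
  proof (cases "even a")
    case True
    then obtain c where c: "a = 2*c" by (auto elim: evenE)
    then have "b = 2*c - 1" "c \<ge> 1" "c \<le> j" using True a tj unfolding b_def by auto
    then show ?thesis using c tj unfolding prt_def by auto
  next
    case False
    then obtain c where c: "a = 2*c+1" by (auto elim: oddE)
    then have "b = 2*c + 2" "c < j" using False a tj unfolding b_def by auto
    then show ?thesis using c tj unfolding prt_def by auto
  qed
  then obtain y where y: "y \<in> verts G" "h y = b" using h(1) b unfolding bij_betw_def by (metis imageE)
  then have "\<not> adj (N_graph t j) (h x) (h y)" using b unfolding a_def by (auto simp: N_adj)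
  then show False using h(2) x y(1) by blast
qed

lemma surj_ex:
  assumes "finite A" "finite B" "card B \<le> card A" "B \<noteq> {}"
  shows "\<exists>\<sigma>. \<sigma> ` A = B"
proof -
  obtain hA where hA: "bij_betw hA A {0..<card A}" using ex_bij_betw_finite_nat assms(1) by blast
  obtain hB where hB: "bij_betw hB {0..<card B} B" using ex_bij_betw_nat_finite assms(2) by blast
  have cB: "card B > 0" using assms(2,4) by auto
  define \<sigma> where "\<sigma> x = hB (min (hA x) (card B - 1))" for x
  have "\<sigma> ` A = B"
  proof
    show "\<sigma> ` A \<subseteq> B" using hB cB unfolding \<sigma>_def bij_betw_def by auto
    show "B \<subseteq> \<sigma> ` A"
    proof
      fix b assume "b \<in> B"
      then have "b \<in> hB ` {0..<card B}" using hB unfolding bij_betw_def by simp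
      then obtain k where k0: "k \<in> {0..<card B}" "hB k = b" by blast
      then have k: "k < card B" "hB k = b" by auto
      then have "k \<in> hA ` A" using hA assms(3) unfolding bij_betw_def by auto
      then obtain a where a: "a \<in> A" "hA a = k" by blast
      then have "\<sigma> a = b" using k unfolding \<sigma>_def by simp
      then show "b \<in> \<sigma> ` A" using a by blast
    qed
  qed
  then show ?thesis by blast
qed

lemma matching:
  assumes H: "fin_refl_graph H"
    and st: "\<forall>S \<subseteq> verts H. card S < n \<longrightarrow> (\<exists>x \<in> verts H - S. \<exists>y \<in> verts H - S. \<not> adj H x y)"
    and kn: "2*k < n"
  shows "j \<le> k \<Longrightarrow> \<exists>p. inj_on p {1..2*j} \<and> p ` {1..2*j} \<subseteq> verts H \<and> (\<forall>i\<in>{1..j}. \<not> adj H (p (2*i-1)) (p (2*i)))"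
proof (induction j)
  case 0 then show ?case by simp
next
  case (Suc j)
  then obtain p where p: "inj_on p {1..2*j}" "p ` {1..2*j} \<subseteq> verts H" "\<forall>i\<in>{1..j}. \<not> adj H (p (2*i-1)) (p (2*i))"
    by auto
  have "card (p ` {1..2*j}) < n" using card_image_le[of "{1..2*j}" p] Suc.prems kn by simp
  from st[rule_format, OF p(2) this] obtain x y where xy: "x \<in> verts H - p ` {1..2*j}" "y \<in> verts H - p ` {1..2*j}" "\<not> adj H x y"
    by blast
  have xny: "x \<noteq> y" using xy H unfolding fin_refl_graph_def by auto
  define p' where "p' = p(2*j+1 := x, 2*j+2 := y)"
  have dom: "{1..2*Suc j} = insert (2*j+1) (insert (2*j+2) {1..2*j})" by auto
  have pe: "p' a = p a" if "a \<in> {1..2*j}" for a using that unfolding p'_def by auto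
  have im: "p' ` {1..2*j} = p ` {1..2*j}" using pe by (rule image_cong[OF refl])
  have "inj_on p' {1..2*j}" using p(1) pe by (metis inj_on_cong)
  moreover have "p' (2*j+1) \<notin> p' ` insert (2*j+2) {1..2*j}" using xy xny im unfolding p'_def by auto
  moreover have "p' (2*j+2) \<notin> p' ` {1..2*j}" using xy im unfolding p'_def by auto
  ultimately have inj: "inj_on p' {1..2*Suc j}" unfolding dom by simp
  have sub: "p' ` {1..2*Suc j} \<subseteq> verts H" using p(2) xy im unfolding dom p'_def by auto
  have na: "\<forall>i\<in>{1..Suc j}. \<not> adj H (p' (2*i-1)) (p' (2*i))"
  proof
    fix i assume i: "i \<in> {1..Suc j}"
    show "\<not> adj H (p' (2*i-1)) (p' (2*i))"
    proof (cases "i = Suc j")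
      case True then show ?thesis using xy(3) unfolding p'_def by simp
    next
      case False
      then have "i \<in> {1..j}" using i by auto
      then have "2*i-1 \<in> {1..2*j}" "2*i \<in> {1..2*j}" by auto
      then have "p' (2*i-1) = p (2*i-1)" "p' (2*i) = p (2*i)" using pe by blast+
      then show ?thesis using p(3) \<open>i \<in> {1..j}\<close> by simp
    qed
  qed
  show ?case using inj sub na by blast
qed

lemma cover:
  assumes H: "fin_refl_graph H" and kn: "2*k < n" and nh: "\<not> hom_image (N_graph n k) H"
  shows "\<exists>S \<subseteq> verts H. card S < n \<and> (\<forall>x\<in>verts H - S. \<forall>y\<in>verts H - S. adj H x y)"
proof (rule ccontr)
  assume "\<not> ?thesis"
  then have st: "\<forall>S \<subseteq> verts H. card S < n \<longrightarrow> (\<exists>x \<in> verts H - S. \<exists>y \<in> verts H - S. \<not> adj H x y)"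
    by blast
  have finV: "finite (verts H)" using H unfolding fin_refl_graph_def by auto
  have cV: "n \<le> card (verts H)"
  proof (rule ccontr)
    assume "\<not> n \<le> card (verts H)"
    then show False using st[rule_format, of "verts H"] by auto
  qed
  obtain p where p: "inj_on p {1..2*k}" "p ` {1..2*k} \<subseteq> verts H" "\<forall>i\<in>{1..k}. \<not> adj H (p (2*i-1)) (p (2*i))"
    using matching[OF H st kn, of k] by auto
  define S where "S = p ` {1..2*k}"
  have cS: "card S = 2*k" unfolding S_def using card_image[OF p(1)] by simp
  have cR: "card (verts H - S) = card (verts H) - 2*k" using cS p(2) finV unfolding S_def
    by (simp add: card_Diff_subset)
  have c1: "card {2*k+1..n} \<le> card (verts H - S)" using cR cV by simp
  have c2: "{2*k+1..n} \<noteq> {}" using kn by simp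
  have c3: "finite (verts H - S)" using finV by simp
  obtain \<sigma> where \<sigma>: "\<sigma> ` (verts H - S) = {2*k+1..n}"
    using surj_ex[OF c3 finite_atLeastAtMost c1 c2] by blast
  define f where "f v = (if v \<in> S then the_inv_into {1..2*k} p v else \<sigma> v)" for v
  have fS: "f (p a) = a" if "a \<in> {1..2*k}" for a
    using that the_inv_into_f_f[OF p(1)] unfolding f_def S_def by auto
  have fS': "f v \<in> {1..2*k} \<and> p (f v) = v" if "v \<in> S" for v
    using that fS unfolding S_def by auto
  have fR: "f v \<in> {2*k+1..n}" if "v \<in> verts H - S" for v
    using that \<sigma> unfolding f_def by auto
  have frange: "f v \<in> {1..n}" if "v \<in> verts H" for v
  proof (cases "v \<in> S")
    case True then show ?thesis using fS'[OF True] kn by auto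
  next
    case False then show ?thesis using fR[of v] that by auto
  qed
  have hom: "graph_hom f H (N_graph n k)" unfolding graph_hom_def
  proof (intro conjI ballI impI)
    show "f ` verts H \<subseteq> verts (N_graph n k)" using frange by auto
    fix u v assume uv: "u \<in> verts H" "v \<in> verts H" "adj H u v"
    show "adj (N_graph n k) (f u) (f v)"
    proof (rule ccontr)
      assume "\<not> adj (N_graph n k) (f u) (f v)"
      then have pr: "prt (f u) (f v)" "(f u + 1) div 2 \<le> k" using frange uv by (auto simp: N_adj)
      then have "(f v + 1) div 2 \<le> k" unfolding prt_def by simp
      then have le: "f u \<le> 2*k" "f v \<le> 2*k" using pr(2) by auto
      have "u \<in> S"
      proof (rule ccontr)
        assume "u \<notin> S" then have "f u \<in> {2*k+1..n}" using fR uv by simp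
        then show False using le by simp
      qed
      moreover have "v \<in> S"
      proof (rule ccontr)
        assume "v \<notin> S" then have "f v \<in> {2*k+1..n}" using fR uv by simp
        then show False using le by simp
      qed
      ultimately have "u \<in> S" "v \<in> S" by auto
      then have pu: "p (f u) = u" "p (f v) = v" using fS' by auto
      obtain i where "i \<in> {1..k}" "{f u, f v} = {2*i-1, 2*i}" using pair_iff[of k "f u" "f v"] pr by blast
      then have "(f u = 2*i-1 \<and> f v = 2*i) \<or> (f u = 2*i \<and> f v = 2*i-1)" by (auto simp: doubleton_eq_iff)
      then show False
      proof
        assume "f u = 2*i-1 \<and> f v = 2*i"
        then show False using p(3) \<open>i \<in> {1..k}\<close> pu uv(3) by metis
      next
        assume "f u = 2*i \<and> f v = 2*i-1"
        moreover have "adj H v u" using uv(3) H unfolding fin_refl_graph_def by blast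
        ultimately show False using p(3) \<open>i \<in> {1..k}\<close> pu by metis
      qed
    qed
  qed
  have "f ` verts H = {1..n}"
  proof
    show "f ` verts H \<subseteq> {1..n}" using frange by auto
    show "{1..n} \<subseteq> f ` verts H"
    proof
      fix a assume a: "a \<in> {1..n}"
      show "a \<in> f ` verts H"
      proof (cases "a \<le> 2*k")
        case True
        then have "a \<in> {1..2*k}" using a by auto
        then have "f (p a) = a" "p a \<in> verts H" using fS p(2) by auto
        then show ?thesis by (metis image_eqI)
      next
        case False
        then have "a \<in> \<sigma> ` (verts H - S)" using \<sigma> a by auto
        then obtain v where v: "v \<in> verts H - S" "\<sigma> v = a" by blast
        then have "f v = a" "v \<in> verts H" unfolding f_def by auto
        then show ?thesis by (metis image_eqI)
      qed
    qed
  qed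
  then show False using nh hom unfolding hom_image_def by auto
qed

lemma no_strict_dec:
  fixes Y :: "nat set" and c :: "nat \<Rightarrow> nat"
  assumes "infinite Y" "\<forall>x\<in>Y. \<forall>y\<in>Y. x < y \<longrightarrow> c y < c x"
  shows False
proof -
  obtain y0 where "y0 \<in> Y" using assms(1) by (metis finite.emptyI ex_in_conv)
  obtain m where m: "m \<in> Y" "\<forall>y. y \<in> Y \<longrightarrow> c m \<le> c y"
    using ex_has_least_nat[of "\<lambda>y. y \<in> Y" y0 c] \<open>y0 \<in> Y\<close> by blast
  obtain y where y: "y > m" "y \<in> Y" using assms(1) unfolding infinite_nat_iff_unbounded by blast
  have "c y < c m" using assms(2) m(1) y by blast
  moreover have "c m \<le> c y" using m y by blast
  ultimately show False by simp
qed

lemma dickson: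
  fixes c :: "nat \<Rightarrow> 'a \<Rightarrow> nat"
  assumes "finite D"
  shows "infinite Z \<Longrightarrow> \<exists>Y\<subseteq>Z. infinite Y \<and> (\<forall>i\<in>Y. \<forall>j\<in>Y. i < j \<longrightarrow> (\<forall>d\<in>D. c i d \<le> c j d))"
  using assms
proof (induction D arbitrary: Z rule: finite_induct)
  case empty then show ?case by blast
next
  case (insert d D)
  obtain Y where Y: "Y \<subseteq> Z" "infinite Y" "\<forall>i\<in>Y. \<forall>j\<in>Y. i < j \<longrightarrow> (\<forall>d\<in>D. c i d \<le> c j d)"
    using insert.IH insert.prems by blast
  define f where "f X = (if c (Min X) d \<le> c (Max X) d then 0 else (1::nat))" for X :: "nat set"
  have "\<forall>x\<in>Y. \<forall>y\<in>Y. x \<noteq> y \<longrightarrow> f {x, y} < 2" unfolding f_def by auto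
  then obtain Y' t where Y': "Y' \<subseteq> Y" "infinite Y'" "t < 2" "\<forall>x\<in>Y'. \<forall>y\<in>Y'. x \<noteq> y \<longrightarrow> f {x, y} = t"
    using Ramsey2[OF Y(2), of f 2] by blast
  have mm: "Min {x,y} = x" "Max {x,y} = y" if "x < y" for x y :: nat using that by auto
  show ?case
  proof (cases "t = 0")
    case True
    have all: "\<forall>i\<in>Y'. \<forall>j\<in>Y'. i < j \<longrightarrow> (\<forall>d'\<in>insert d D. c i d' \<le> c j d')"
    proof (intro ballI impI)
      fix i j d' assume ij: "i \<in> Y'" "j \<in> Y'" "i < j" and d': "d' \<in> insert d D"
      have "f {i,j} = 0" using Y'(4) ij True by auto
      then have "c i d \<le> c j d" using mm[OF ij(3)] unfolding f_def by (auto split: if_splits)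
      moreover have "\<forall>d\<in>D. c i d \<le> c j d" using Y(3) Y'(1) ij by blast
      ultimately show "c i d' \<le> c j d'" using d' by blast
    qed
    show ?thesis
    proof (intro exI[of _ Y'] conjI)
      show "Y' \<subseteq> Z" using Y'(1) Y(1) by blast
      show "infinite Y'" by (rule Y'(2))
      show "\<forall>i\<in>Y'. \<forall>j\<in>Y'. i < j \<longrightarrow> (\<forall>d'\<in>insert d D. c i d' \<le> c j d')" by (rule all)
    qed
  next
    case False
    then have t1: "t = 1" using Y'(3) by simp
    have "\<forall>x\<in>Y'. \<forall>y\<in>Y'. x < y \<longrightarrow> c y d < c x d"
    proof (intro ballI impI)
      fix x y assume xy: "x \<in> Y'" "y \<in> Y'" "x < y"
      have "f {x,y} = 1" using Y'(4) xy t1 by auto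
      then show "c y d < c x d" using mm[OF xy(3)] unfolding f_def by (auto split: if_splits)
    qed
    then have False using no_strict_dec[OF Y'(2), of "\<lambda>i. c i d"] by blast
    then show ?thesis by blast
  qed
qed

lemma compare:
  fixes HA HB :: graph and ea eb :: "nat \<Rightarrow> nat" and s :: nat
  defines "S1 \<equiv> ea ` {..<s}" and "S2 \<equiv> eb ` {..<s}"
  defines "ty1 \<equiv> \<lambda>v. {a. a < s \<and> adj HA v (ea a)}" and "ty2 \<equiv> \<lambda>v. {a. a < s \<and> adj HB v (eb a)}"
  assumes HA: "fin_refl_graph HA" and HB: "fin_refl_graph HB"
    and ea: "inj_on ea {..<s}" "S1 \<subseteq> verts HA" and c1: "\<forall>x\<in>verts HA - S1. \<forall>y\<in>verts HA - S1. adj HA x y"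
    and eb: "inj_on eb {..<s}" "S2 \<subseteq> verts HB" and c2: "\<forall>x\<in>verts HB - S2. \<forall>y\<in>verts HB - S2. adj HB x y"
    and E: "\<forall>a<s. \<forall>b<s. adj HA (ea a) (ea b) \<longleftrightarrow> adj HB (eb a) (eb b)"
    and O: "ty1 ` (verts HA - S1) = ty2 ` (verts HB - S2)"
    and C: "\<forall>T\<in>ty1 ` (verts HA - S1). card {v\<in>verts HA - S1. ty1 v = T} \<le> card {v\<in>verts HB - S2. ty2 v = T}"
  shows "hom_image HA HB"
proof -
  define R1 where "R1 = verts HA - S1"
  define R2 where "R2 = verts HB - S2"
  define A where "A T = {v\<in>R2. ty2 v = T}" for T
  define B where "B T = {v\<in>R1. ty1 v = T}" for T
  define Ob where "Ob = ty2 ` R2"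
  have fin1: "finite (verts HA)" and fin2: "finite (verts HB)" using HA HB unfolding fin_refl_graph_def by auto
  have sym1: "adj HA x y \<Longrightarrow> adj HA y x" for x y using HA unfolding fin_refl_graph_def by blast
  have sym2: "adj HB x y \<Longrightarrow> adj HB y x" for x y using HB unfolding fin_refl_graph_def by blast
  have "\<forall>T\<in>Ob. \<exists>\<sigma>. \<sigma> ` A T = B T"
  proof
    fix T assume T: "T \<in> Ob"
    have fA: "finite (A T)" unfolding A_def R2_def using fin2 by simp
    have fB: "finite (B T)" unfolding B_def R1_def using fin1 by simp
    have T1: "T \<in> ty1 ` R1" using T O unfolding Ob_def R1_def R2_def by simp
    then have ne: "B T \<noteq> {}" unfolding B_def by auto
    have "card (B T) \<le> card (A T)" using C T1 unfolding A_def B_def R1_def R2_def by blast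
    then show "\<exists>\<sigma>. \<sigma> ` A T = B T" using surj_ex[OF fA fB _ ne] by blast
  qed
  then obtain \<sigma> where \<sigma>: "\<forall>T\<in>Ob. \<sigma> T ` A T = B T" by metis
  define inv2 where "inv2 = the_inv_into {..<s} eb"
  define f where "f v = (if v \<in> S2 then ea (inv2 v) else \<sigma> (ty2 v) v)" for v
  have fS: "f (eb a) = ea a" if "a < s" for a
    using that the_inv_into_f_f[OF eb(1)] unfolding f_def inv2_def S2_def by auto
  have fR: "f v \<in> R1 \<and> ty1 (f v) = ty2 v" if "v \<in> R2" for v
  proof -
    have vS: "v \<notin> S2" using that unfolding R2_def by auto
    have T: "ty2 v \<in> Ob" using that unfolding Ob_def by auto
    have "v \<in> A (ty2 v)" using that unfolding A_def by auto
    then have "\<sigma> (ty2 v) v \<in> B (ty2 v)" using \<sigma> T by blast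
    then show ?thesis using vS unfolding f_def B_def by auto
  qed
  have V2: "v \<in> S2 \<or> v \<in> R2" if "v \<in> verts HB" for v using that unfolding R2_def by auto
  have S2e: "\<exists>a<s. v = eb a" if "v \<in> S2" for v using that unfolding S2_def by auto
  have eav: "ea a \<in> verts HA" if "a < s" for a using ea(2) that unfolding S1_def by auto
  have R1v: "R1 \<subseteq> verts HA" unfolding R1_def by auto
  have fv: "f v \<in> verts HA" if "v \<in> verts HB" for v
  proof (cases "v \<in> S2")
    case True
    then obtain a where "a < s" "v = eb a" using S2e by blast
    then show ?thesis using fS eav by simp
  next
    case False
    then have "v \<in> R2" using V2[OF that] by blast
    then show ?thesis using fR R1v by blast
  qed
  have hom: "graph_hom f HB HA" unfolding graph_hom_def
  proof (intro conjI ballI impI)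
    show "f ` verts HB \<subseteq> verts HA" using fv by auto
    fix u v assume uv: "u \<in> verts HB" "v \<in> verts HB" "adj HB u v"
    show "adj HA (f u) (f v)"
    proof (cases "u \<in> S2")
      case True
      then obtain a where a: "a < s" "u = eb a" using S2e by blast
      show ?thesis
      proof (cases "v \<in> S2")
        case True
        then obtain b where b: "b < s" "v = eb b" using S2e by blast
        then show ?thesis using a fS E uv(3) by auto
      next
        case False
        then have vR: "v \<in> R2" using V2 uv(2) by blast
        have "a \<in> ty2 v" using a sym2[OF uv(3)] unfolding ty2_def by auto
        then have "a \<in> ty1 (f v)" using fR[OF vR] by simp
        then have "adj HA (f v) (ea a)" unfolding ty1_def by simp
        then show ?thesis using sym1 fS a by metis
      qed
    next
      case False
      then have uR: "u \<in> R2" using V2 uv(1) by blast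
      show ?thesis
      proof (cases "v \<in> S2")
        case True
        then obtain b where b: "b < s" "v = eb b" using S2e by blast
        have "b \<in> ty2 u" using b uv(3) unfolding ty2_def by auto
        then have "b \<in> ty1 (f u)" using fR[OF uR] by simp
        then have "adj HA (f u) (ea b)" unfolding ty1_def by simp
        then show ?thesis using fS b by metis
      next
        case False
        then have vR: "v \<in> R2" using V2 uv(2) by blast
        show ?thesis using c1 fR[OF uR] fR[OF vR] unfolding R1_def by blast
      qed
    qed
  qed
  have "verts HA \<subseteq> f ` verts HB"
  proof
    fix w assume w: "w \<in> verts HA"
    show "w \<in> f ` verts HB"
    proof (cases "w \<in> S1")
      case True
      then obtain a where a: "a < s" "w = ea a" unfolding S1_def by auto
      then have "eb a \<in> verts HB" using eb(2) unfolding S2_def by auto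
      then show ?thesis using fS a by (metis image_eqI)
    next
      case False
      then have wR: "w \<in> R1" using w unfolding R1_def by auto
      then have T: "ty1 w \<in> Ob" using O unfolding Ob_def R1_def R2_def by auto
      have "w \<in> B (ty1 w)" using wR unfolding B_def by auto
      then have "w \<in> \<sigma> (ty1 w) ` A (ty1 w)" using \<sigma> T by blast
      then obtain v where v: "v \<in> A (ty1 w)" "w = \<sigma> (ty1 w) v" by blast
      then have vR: "v \<in> R2" "ty2 v = ty1 w" unfolding A_def by auto
      then have "v \<notin> S2" unfolding R2_def by auto
      then have "f v = w" using v vR unfolding f_def by simp
      moreover have "v \<in> verts HB" using vR unfolding R2_def by auto
      ultimately show ?thesis by (metis image_eqI)
    qed
  qed
  then have "f ` verts HB = verts HA" using fv by auto
  then show ?thesis using hom unfolding hom_image_def by blast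
qed

lemma cover_enum:
  assumes H: "fin_refl_graph H" and kn: "2*k < n" and nh: "\<not> hom_image (N_graph n k) H"
  shows "\<exists>s e. s < n \<and> inj_on e {..<s} \<and> e ` {..<s} \<subseteq> verts H
     \<and> (\<forall>x\<in>verts H - e ` {..<s}. \<forall>y\<in>verts H - e ` {..<s}. adj H x y)"
proof -
  obtain S where S: "S \<subseteq> verts H" "card S < n" "\<forall>x\<in>verts H - S. \<forall>y\<in>verts H - S. adj H x y"
    using cover[OF H kn nh] by blast
  have "finite S" using S(1) H unfolding fin_refl_graph_def by (auto intro: finite_subset)
  then obtain h where h: "bij_betw h {0..<card S} S" using ex_bij_betw_nat_finite by blast
  then have "inj_on h {..<card S}" "h ` {..<card S} = S" unfolding bij_betw_def by (auto simp: atLeast0LessThan)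
  then show ?thesis using S by metis
qed

lemma no_antichain:
  assumes kn: "2*k < n"
  shows "\<not> (\<exists>g :: nat \<Rightarrow> graph. (\<forall>i. g i \<in> Av (N_graph n k)) \<and> (\<forall>i j. i \<noteq> j \<longrightarrow> \<not> hom_image (g i) (g j)))"
proof
  assume "\<exists>g :: nat \<Rightarrow> graph. (\<forall>i. g i \<in> Av (N_graph n k)) \<and> (\<forall>i j. i \<noteq> j \<longrightarrow> \<not> hom_image (g i) (g j))"
  then obtain g :: "nat \<Rightarrow> graph" where g: "\<forall>i. g i \<in> Av (N_graph n k)" "\<forall>i j. i \<noteq> j \<longrightarrow> \<not> hom_image (g i) (g j)"
    by blast
  have Hf: "fin_refl_graph (g i)" and Hn: "\<not> hom_image (N_graph n k) (g i)" for i
    using g(1) unfolding Av_def by auto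
  have "\<forall>i. \<exists>s e. s < n \<and> inj_on e {..<s} \<and> e ` {..<s} \<subseteq> verts (g i)
     \<and> (\<forall>x\<in>verts (g i) - e ` {..<s}. \<forall>y\<in>verts (g i) - e ` {..<s}. adj (g i) x y)"
    using cover_enum[OF Hf kn Hn] by blast
  then obtain s e where se: "\<And>i. s i < n \<and> inj_on (e i) {..<s i} \<and> e i ` {..<s i} \<subseteq> verts (g i)
     \<and> (\<forall>x\<in>verts (g i) - e i ` {..<s i}. \<forall>y\<in>verts (g i) - e i ` {..<s i}. adj (g i) x y)"
    by metis
  define R where "R i = verts (g i) - e i ` {..<s i}" for i
  define ty where "ty i v = {a. a < s i \<and> adj (g i) v (e i a)}" for i v
  define E where "E i = {(a,b). a < s i \<and> b < s i \<and> adj (g i) (e i a) (e i b)}" for i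
  define code where "code i = (s i, E i, ty i ` R i)" for i
  have tyn: "ty i v \<in> Pow {..<n}" for i v using se[of i] unfolding ty_def by auto
  have "code ` UNIV \<subseteq> {..<n} \<times> Pow ({..<n} \<times> {..<n}) \<times> Pow (Pow {..<n})"
  proof
    fix c assume "c \<in> code ` UNIV"
    then obtain i where c: "c = code i" by blast
    have "s i < n" using se[of i] by blast
    moreover have "E i \<subseteq> {..<n} \<times> {..<n}" using se[of i] unfolding E_def by auto
    moreover have "ty i ` R i \<subseteq> Pow {..<n}" using tyn by auto
    ultimately show "c \<in> {..<n} \<times> Pow ({..<n} \<times> {..<n}) \<times> Pow (Pow {..<n})" unfolding c code_def by auto
  qed
  then have "finite (code ` UNIV)" by (rule finite_subset) auto
  from inf_img_fin_dom[OF this infinite_UNIV_nat] obtain y where y: "infinite (code -` {y})" by blast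
  obtain Y where Y: "Y \<subseteq> code -` {y}" "infinite Y"
    "\<forall>i\<in>Y. \<forall>j\<in>Y. i < j \<longrightarrow> (\<forall>T\<in>Pow {..<n}. card {v\<in>R i. ty i v = T} \<le> card {v\<in>R j. ty j v = T})"
    using dickson[of "Pow {..<n}" "code -` {y}" "\<lambda>i T. card {v\<in>R i. ty i v = T}"] y by auto
  obtain i where i: "i \<in> Y" using Y(2) by (metis finite.emptyI ex_in_conv)
  obtain j where j: "j > i" "j \<in> Y" using Y(2) unfolding infinite_nat_iff_unbounded by blast
  have cij: "code i = code j" using Y(1) i j by auto
  then have sij: "s j = s i" and Eij: "E i = E j" and Oij: "ty i ` R i = ty j ` R j"
    unfolding code_def by auto
  have tyj: "ty j v = {a. a < s i \<and> adj (g j) v (e j a)}" for v unfolding ty_def sij ..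
  have Rj: "R j = verts (g j) - e j ` {..<s i}" unfolding R_def sij ..
  have "hom_image (g i) (g j)"
  proof (rule compare[where HA="g i" and HB="g j" and ea="e i" and eb="e j" and s="s i"])
    show "fin_refl_graph (g i)" "fin_refl_graph (g j)" by (rule Hf)+
    show "inj_on (e i) {..<s i}" "e i ` {..<s i} \<subseteq> verts (g i)"
      "\<forall>x\<in>verts (g i) - e i ` {..<s i}. \<forall>y\<in>verts (g i) - e i ` {..<s i}. adj (g i) x y"
      using se[of i] by blast+
    show "inj_on (e j) {..<s i}" "e j ` {..<s i} \<subseteq> verts (g j)"
      "\<forall>x\<in>verts (g j) - e j ` {..<s i}. \<forall>y\<in>verts (g j) - e j ` {..<s i}. adj (g j) x y"
      using se[of j] unfolding sij by blast+
    show "\<forall>a<s i. \<forall>b<s i. adj (g i) (e i a) (e i b) \<longleftrightarrow> adj (g j) (e j a) (e j b)"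
    proof (intro allI impI)
      fix a b assume ab: "a < s i" "b < s i"
      have "(a,b) \<in> E i \<longleftrightarrow> (a,b) \<in> E j" using Eij by simp
      then show "adj (g i) (e i a) (e i b) \<longleftrightarrow> adj (g j) (e j a) (e j b)"
        using ab unfolding E_def sij by simp
    qed
    show "(\<lambda>v. {a. a < s i \<and> adj (g i) v (e i a)}) ` (verts (g i) - e i ` {..<s i}) =
          (\<lambda>v. {a. a < s i \<and> adj (g j) v (e j a)}) ` (verts (g j) - e j ` {..<s i})"
      using Oij unfolding ty_def R_def sij by simp
    show "\<forall>T\<in>(\<lambda>v. {a. a < s i \<and> adj (g i) v (e i a)}) ` (verts (g i) - e i ` {..<s i}).
       card {v \<in> verts (g i) - e i ` {..<s i}. {a. a < s i \<and> adj (g i) v (e i a)} = T}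
       \<le> card {v \<in> verts (g j) - e j ` {..<s i}. {a. a < s i \<and> adj (g j) v (e j a)} = T}"
    proof
      fix T assume "T \<in> (\<lambda>v. {a. a < s i \<and> adj (g i) v (e i a)}) ` (verts (g i) - e i ` {..<s i})"
      then have "T \<in> Pow {..<n}" using tyn[of i] unfolding ty_def by auto
      then have "card {v\<in>R i. ty i v = T} \<le> card {v\<in>R j. ty j v = T}" using Y(3) i j by blast
      then show "card {v \<in> verts (g i) - e i ` {..<s i}. {a. a < s i \<and> adj (g i) v (e i a)} = T}
       \<le> card {v \<in> verts (g j) - e j ` {..<s i}. {a. a < s i \<and> adj (g j) v (e j a)} = T}"
        unfolding tyj Rj unfolding ty_def R_def by simp
    qed
  qed
  then show False using g(2) j(1) by auto
qed

lemma iso_refl: "graph_iso G G"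
  unfolding graph_iso_def by (intro exI[of _ id]) auto

lemma graph_pair: "(verts G, adj G) = G" by (simp add: verts_def adj_def)

lemma not_onto_from_N:
  assumes G: "fin_refl_graph G" and nex: "\<not> (\<exists>n k. 2 * k < n \<and> graph_iso G (N_graph n k))"
    and cd: "card (verts G) < 2*m"
  shows "\<not> hom_image G (N_graph (2*m) m)"
proof
  assume hi: "hom_image G (N_graph (2*m) m)"
  have o: "(\<forall>x\<in>verts G. \<forall>y\<in>verts G. \<forall>z\<in>verts G. \<not> adj G x y \<longrightarrow> \<not> adj G x z \<longrightarrow> y = z)
       \<and> (\<exists>x\<in>verts G. \<forall>y\<in>verts G. adj G x y)" using onto_N2m[OF G hi cd] .
  have "\<exists>j. 2*j \<le> card (verts G) \<and> graph_iso (verts G, adj G) (N_graph (card (verts G)) j)"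
    by (rule iso_N_ex) (use G o in \<open>auto simp: fin_refl_graph_def\<close>)
  then obtain j where j: "2*j \<le> card (verts G)" "graph_iso G (N_graph (card (verts G)) j)"
    unfolding graph_pair by blast
  obtain x where "x \<in> verts G" "\<forall>y\<in>verts G. adj G x y" using o by blast
  then have "2*j < card (verts G)" using dominating_strict[OF j(2) j(1)] by blast
  then show False using nex j(2) by blast
qed

theorem theorem3p4:
  assumes "fin_refl_graph G"
  shows "wqo_hom (Av G) \<longleftrightarrow> (\<exists>n k. 2 * k < n \<and> graph_iso G (N_graph n k))"
proof
  assume w: "wqo_hom (Av G)"
  show "\<exists>n k. 2 * k < n \<and> graph_iso G (N_graph n k)"
  proof (rule ccontr)
    assume nex: "\<not> (\<exists>n k. 2 * k < n \<and> graph_iso G (N_graph n k))"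
    define M where "M = card (verts G) + 1"
    define g where "g i = N_graph (2*(i+M)) (i+M)" for i
    have inAv: "g i \<in> Av G" for i
      unfolding Av_def g_def using fin_N not_onto_from_N[OF assms nex, of "i+M"] unfolding M_def by auto
    have anti: "\<not> hom_image (g i) (g j)" if "i \<noteq> j" for i j
    proof
      assume hi: "hom_image (g i) (g j)"
      show False
      proof (cases "i < j")
        case True
        have cd: "card (verts (g i)) < 2*(j+M)" using True unfolding g_def by simp
        have fg: "fin_refl_graph (g i)" unfolding g_def by (rule fin_N)
        have hi': "hom_image (g i) (N_graph (2*(j+M)) (j+M))" using hi unfolding g_def .
        obtain x where x: "x \<in> verts (g i)" "\<forall>y\<in>verts (g i). adj (g i) x y"
          using onto_N2m[OF fg hi' cd] by blast
        have isg: "graph_iso (g i) (N_graph (2*(i+M)) (i+M))" unfolding g_def by (rule iso_refl)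
        have "2*(i+M) < 2*(i+M)" using dominating_strict[OF isg _ x(1) x(2)] by simp
        then show False by simp
      next
        case False
        then have "j < i" using that by simp
        then have "card (verts (g j)) < card (verts (g i))" unfolding g_def by simp
        then show False using hom_image_card[OF fin_N hi[unfolded g_def]] unfolding g_def by simp
      qed
    qed
    have "\<exists>g :: nat \<Rightarrow> graph. (\<forall>i. g i \<in> Av G) \<and> (\<forall>i j. i \<noteq> j \<longrightarrow> \<not> hom_image (g i) (g j))"
      using inAv anti by blast
    then show False using w unfolding wqo_hom_def by blast
  qed
next
  assume "\<exists>n k. 2 * k < n \<and> graph_iso G (N_graph n k)"
  then obtain n k where nk: "2*k < n" "graph_iso G (N_graph n k)" by blast
  have Av: "Av G = Av (N_graph n k)" using iso_Av[OF nk(2)] .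
  have d: "\<not> (\<exists>g :: nat \<Rightarrow> graph. (\<forall>i. g i \<in> Av G) \<and>
          (\<forall>i. hom_image (g (Suc i)) (g i) \<and> \<not> hom_image (g i) (g (Suc i))))"
  proof
    assume "\<exists>g :: nat \<Rightarrow> graph. (\<forall>i. g i \<in> Av G) \<and>
          (\<forall>i. hom_image (g (Suc i)) (g i) \<and> \<not> hom_image (g i) (g (Suc i)))"
    then obtain g :: "nat \<Rightarrow> graph" where "\<forall>i. g i \<in> Av G"
      "\<forall>i. hom_image (g (Suc i)) (g i) \<and> \<not> hom_image (g i) (g (Suc i))" by blast
    moreover have "\<forall>i. fin_refl_graph (g i)" using calculation(1) unfolding Av_def by auto
    ultimately show False using no_desc by blast
  qed
  show "wqo_hom (Av G)" unfolding wqo_hom_def using d no_antichain[OF nk(1)] unfolding Av by blast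
qed

end
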